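(* Let $d\geq1$ and fix any $\alpha\in\mathbb{Z}^d$. Then $\big\|d+\sum_{j=1}^d z_j-\varepsilon z^\alpha\big\|_\infty<\big\|d+\sum_{j=1}^d z_j\big\|_\infty$ for every sufficiently small $\varepsilon>0$, where $\|\cdot\|_\infty$ is the supremum norm on $\mathbb{T}^d$.
   Context: $\mathbb{T}^d$ is the $d$-dimensional torus with coordinates $z=(z_1,\dots,z_d)$, and $z^\alpha=z_1^{\alpha_1}\cdots z_d^{\alpha_d}$. *)

theory Defs
  imports "HOL-Analysis.Analysis"
begin

text \<open>The d-dimensional torus, points represented as functions nat => complex;
  coordinates 0..d-1 are the unimodular coordinates z_1..z_d, all other coordinates are fixed to 1.\<close>
definition torus :: "nat \<Rightarrow> (nat \<Rightarrow> complex) set" where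
  "torus d = {z. (\<forall>j<d. cmod (z j) = 1) \<and> (\<forall>j\<ge>d. z j = 1)}"

definition monom_T :: "nat \<Rightarrow> (nat \<Rightarrow> int) \<Rightarrow> (nat \<Rightarrow> complex) \<Rightarrow> complex" where
  "monom_T d \<alpha> z = (\<Prod>j<d. z j powi \<alpha> j)"

definition sup_norm_T :: "nat \<Rightarrow> ((nat \<Rightarrow> complex) \<Rightarrow> complex) \<Rightarrow> real" where
  "sup_norm_T d f = (SUP z\<in>torus d. cmod (f z))"

end

theory Submission
  imports Defs
begin

lemma pow_bound: "cmod z = 1 \<Longrightarrow> cmod (z ^ n - 1) \<le> real n * cmod (z - 1)"
proof (induction n)
  case 0 then show ?case by simp
next
  case (Suc n)
  have "z ^ Suc n - 1 = z ^ n * (z - 1) + (z ^ n - 1)" by (simp add: algebra_simps)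
  then have "cmod (z ^ Suc n - 1) \<le> cmod (z ^ n * (z - 1)) + cmod (z ^ n - 1)"
    by (metis norm_triangle_ineq)
  also have "cmod (z ^ n * (z - 1)) = cmod (z - 1)" using Suc.prems by (simp add: norm_mult norm_power)
  finally have "cmod (z ^ Suc n - 1) \<le> cmod (z - 1) + cmod (z ^ n - 1)" .
  then show ?case using Suc by (simp add: algebra_simps)
qed

lemma powi_bound: "cmod z = 1 \<Longrightarrow> cmod (z powi k - 1) \<le> real_of_int \<bar>k\<bar> * cmod (z - 1)"
proof (cases "k \<ge> 0")
  case True
  assume z: "cmod z = 1"
  have "z powi k = z ^ nat k" using True by (simp add: power_int_def)
  then show ?thesis using pow_bound[OF z, of "nat k"] True by simp
next
  case False
  assume z: "cmod z = 1"
  have z0: "z \<noteq> 0" using z by auto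
  have e: "z powi k = inverse z ^ nat (-k)" using False by (simp add: power_int_def)
  have iz: "cmod (inverse z) = 1" using z by (simp add: norm_inverse)
  have "inverse z - 1 = (1 - z) / z" using z0 by (simp add: field_simps)
  then have "cmod (inverse z - 1) = cmod (z - 1)" using z by (simp add: norm_divide norm_minus_commute)
  then show ?thesis using pow_bound[OF iz, of "nat (-k)"] False e by simp
qed

lemma prod_bound:
  assumes "finite A" "\<forall>j\<in>A. cmod (a j) = 1"
  shows "cmod ((\<Prod>j\<in>A. a j) - 1) \<le> (\<Sum>j\<in>A. cmod (a j - 1))"
  using assms
proof (induction A rule: finite_induct)
  case empty then show ?case by simp
next
  case (insert x F)
  have "(\<Prod>j\<in>insert x F. a j) - 1 = a x * ((\<Prod>j\<in>F. a j) - 1) + (a x - 1)"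
    using insert by (simp add: algebra_simps)
  then have "cmod ((\<Prod>j\<in>insert x F. a j) - 1) \<le> cmod (a x * ((\<Prod>j\<in>F. a j) - 1)) + cmod (a x - 1)"
    by (metis norm_triangle_ineq)
  also have "cmod (a x * ((\<Prod>j\<in>F. a j) - 1)) = cmod ((\<Prod>j\<in>F. a j) - 1)"
    using insert by (simp add: norm_mult)
  finally show ?case using insert by simp
qed

lemma cmod_sq_minus1: "cmod z = 1 \<Longrightarrow> (cmod (z - 1))^2 = 2 - 2 * Re z"
proof -
  assume "cmod z = 1"
  then have "(Re z)^2 + (Im z)^2 = 1" by (metis cmod_power2 power_one)
  moreover have "(cmod (z - 1))^2 = (Re z - 1)^2 + (Im z)^2" by (simp add: cmod_power2)
  ultimately show ?thesis by (simp add: power2_eq_square algebra_simps)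
qed

lemma pointwise:
  fixes d :: nat and \<alpha> :: "nat \<Rightarrow> int" and \<epsilon> K :: real
  assumes z: "z \<in> torus d" and d: "d \<ge> 1" and K: "K = (\<Sum>j<d. real_of_int \<bar>\<alpha> j\<bar>)"
    and e0: "0 < \<epsilon>" and e1: "\<epsilon> \<le> real d / 2"
  shows "(cmod (of_nat d + (\<Sum>j<d. z j) - complex_of_real \<epsilon> * monom_T d \<alpha> z))^2
         \<le> 4 * (real d)^2 - (4 * real d * \<epsilon> - \<epsilon>^2 - 8 * real d * K^2 * \<epsilon>^2)"
proof -
  define S where "S = (\<Sum>j<d. z j)"
  define f where "f = of_nat d + S"
  define m where "m = monom_T d \<alpha> z"
  define Q where "Q = (\<Sum>j<d. (cmod (z j - 1))^2)"
  define t where "t = sqrt Q"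
  have zj: "\<And>j. j < d \<Longrightarrow> cmod (z j) = 1" using z by (simp add: torus_def)
  have Q: "Q = 2 * real d - 2 * Re S"
    unfolding Q_def S_def using zj by (simp add: cmod_sq_minus1 sum_subtractf sum_distrib_left Re_sum)
  have Q0: "Q \<ge> 0" unfolding Q_def by (simp add: sum_nonneg)
  have t0: "t \<ge> 0" and tQ: "t^2 = Q" using Q0 by (auto simp: t_def)
  have Sle: "cmod S \<le> real d"
  proof -
    have "cmod S \<le> (\<Sum>j<d. cmod (z j))" unfolding S_def by (rule norm_sum)
    also have "\<dots> = real d" using zj by simp
    finally show ?thesis .
  qed
  have ReS: "Re S \<le> real d" using Sle complex_Re_le_cmod order_trans by blast
  have fsq: "(cmod f)^2 \<le> 4 * (real d)^2 - real d * Q"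
  proof -
    have s2: "(cmod S)^2 \<le> (real d)^2" using Sle by (simp add: power_mono)
    have dq: "real d * Q = 2*(real d)^2 - 2*real d*Re S" unfolding Q by (simp add: algebra_simps power2_eq_square)
    have "(cmod f)^2 = (real d + Re S)^2 + (Im S)^2" unfolding f_def by (simp add: cmod_power2)
    also have "\<dots> = (real d)^2 + 2 * real d * Re S + (cmod S)^2" unfolding cmod_power2 by (simp add: power2_eq_square algebra_simps)
    also have "\<dots> \<le> 4 * (real d)^2 - real d * Q" using s2 dq by linarith
    finally show ?thesis .
  qed
  have fle: "cmod f \<le> 2 * real d"
    unfolding f_def using Sle norm_triangle_ineq[of "of_nat d" S] by simp
  have Ref: "Re f = 2 * real d - t^2 / 2" unfolding f_def using Q tQ by (simp add: field_simps)
  have zt: "cmod (z j - 1) \<le> t" if "j < d" for j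
  proof -
    have "(cmod (z j - 1))^2 \<le> Q" unfolding Q_def
      by (rule member_le_sum) (use that in auto)
    then show ?thesis unfolding t_def by (simp add: real_le_rsqrt)
  qed
  have m1: "cmod m = 1" unfolding m_def monom_T_def using zj by (simp add: prod_norm[symmetric] norm_power_int)
  have mb: "cmod (m - 1) \<le> K * t"
  proof -
    have "cmod (m - 1) \<le> (\<Sum>j<d. cmod (z j powi \<alpha> j - 1))"
      unfolding m_def monom_T_def by (rule prod_bound) (use zj in \<open>auto simp: norm_power_int\<close>)
    also have "\<dots> \<le> (\<Sum>j<d. real_of_int \<bar>\<alpha> j\<bar> * t)"
    proof (rule sum_mono)
      fix j assume "j \<in> {..<d}"
      then have j: "j < d" by simp
      have "cmod (z j powi \<alpha> j - 1) \<le> real_of_int \<bar>\<alpha> j\<bar> * cmod (z j - 1)"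
        using powi_bound zj[OF j] by blast
      also have "\<dots> \<le> real_of_int \<bar>\<alpha> j\<bar> * t" using zt[OF j] by (simp add: mult_left_mono)
      finally show "cmod (z j powi \<alpha> j - 1) \<le> real_of_int \<bar>\<alpha> j\<bar> * t" .
    qed
    also have "\<dots> = K * t" unfolding K by (simp add: sum_distrib_right)
    finally show ?thesis .
  qed
  define w where "w = f * cnj m"
  have g: "cmod (f - complex_of_real \<epsilon> * m) = cmod (w - complex_of_real \<epsilon>)"
  proof -
    have "cmod (f - complex_of_real \<epsilon> * m) = cmod ((f - complex_of_real \<epsilon> * m) * cnj m)"
      using m1 by (simp add: norm_mult)
    also have "(f - complex_of_real \<epsilon> * m) * cnj m = w - complex_of_real \<epsilon> * (m * cnj m)"
      unfolding w_def by (simp add: algebra_simps)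
    also have "m * cnj m = 1" using m1 by (metis complex_norm_square of_real_1 power_one mult.commute)
    finally show ?thesis by simp
  qed
  have wsq: "(cmod (w - complex_of_real \<epsilon>))^2 = (cmod f)^2 - 2 * \<epsilon> * Re w + \<epsilon>^2"
  proof -
    have "(cmod w)^2 = (cmod f)^2" unfolding w_def using m1 by (simp add: norm_mult)
    moreover have "(cmod w)^2 = (Re w)^2 + (Im w)^2" by (rule cmod_power2)
    moreover have "(cmod (w - complex_of_real \<epsilon>))^2 = (Re w - \<epsilon>)^2 + (Im w)^2"
      using cmod_power2[of "w - complex_of_real \<epsilon>"] by simp
    ultimately show ?thesis by (simp add: power2_eq_square algebra_simps)
  qed
  have Rew: "Re w \<ge> Re f - 2 * real d * (K * t)"
  proof -
    have "w = f - f * (1 - cnj m)" unfolding w_def by (simp add: algebra_simps)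
    then have "Re w = Re f - Re (f * (1 - cnj m))" by simp
    moreover have "Re (f * (1 - cnj m)) \<le> cmod (f * (1 - cnj m))" by (rule complex_Re_le_cmod)
    moreover have "cmod (f * (1 - cnj m)) = cmod f * cmod (m - 1)"
    proof -
      have "cmod (1 - cnj m) = cmod (cnj (m - 1))" by (metis complex_cnj_diff complex_cnj_one norm_minus_commute)
      also have "\<dots> = cmod (m - 1)" by (rule complex_mod_cnj)
      finally show ?thesis by (simp only: norm_mult)
    qed
    moreover have "cmod f * cmod (m - 1) \<le> 2 * real d * (K * t)"
      using fle mb by (simp add: mult_mono)
    ultimately show ?thesis by linarith
  qed
  have "(cmod (f - complex_of_real \<epsilon> * m))^2
        \<le> 4 * (real d)^2 - real d * t^2 - 2 * \<epsilon> * (2 * real d - t^2 / 2 - 2 * real d * (K * t)) + \<epsilon>^2"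
  proof -
    have "(cmod (f - complex_of_real \<epsilon> * m))^2 = (cmod f)^2 - 2 * \<epsilon> * Re w + \<epsilon>^2" using g wsq by simp
    also have "\<dots> \<le> 4 * (real d)^2 - real d * t^2 - 2 * \<epsilon> * Re w + \<epsilon>^2" using fsq tQ by simp
    also have "\<dots> \<le> 4 * (real d)^2 - real d * t^2 - 2 * \<epsilon> * (2 * real d - t^2 / 2 - 2 * real d * (K * t)) + \<epsilon>^2"
      using Rew Ref e0 by (simp add: mult_left_mono)
    finally show ?thesis .
  qed
  also have "\<dots> \<le> 4 * (real d)^2 - (4 * real d * \<epsilon> - \<epsilon>^2 - 8 * real d * K^2 * \<epsilon>^2)"
  proof -
    have a: "(\<epsilon> - real d) * t^2 \<le> - (real d / 2) * t^2" using mult_right_mono[of "\<epsilon> - real d" "-(real d / 2)" "t^2"] e1 by simp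
    have b: "0 \<le> (real d / 2) * (t - 4 * K * \<epsilon>)^2" by simp
    show ?thesis using a b by (simp add: power2_eq_square algebra_simps)
  qed
  finally show ?thesis unfolding f_def S_def m_def .
qed

theorem lemma2p3:
  fixes d :: nat and \<alpha> :: "nat \<Rightarrow> int"
  assumes "d \<ge> 1"
  shows "\<forall>\<^sub>F \<epsilon> in at_right (0::real).
           sup_norm_T d (\<lambda>z. of_nat d + (\<Sum>j<d. z j) - complex_of_real \<epsilon> * monom_T d \<alpha> z)
           < sup_norm_T d (\<lambda>z. of_nat d + (\<Sum>j<d. z j))"
proof -
  define K where "K = (\<Sum>j<d. real_of_int \<bar>\<alpha> j\<bar>)"
  define e0 where "e0 = min (real d / 2) (4 * real d / (8 * real d * K^2 + 1))"
  have dpos: "real d > 0" using assms by simp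
  have K0: "K \<ge> 0" unfolding K_def by (simp add: sum_nonneg)
  have "0 \<le> 8 * real d * K^2" by simp
  then have den: "8 * real d * K^2 + 1 > 0" by linarith
  then have e0pos: "e0 > 0" unfolding e0_def using dpos by simp
  have one: "(\<lambda>_. 1) \<in> torus d" by (simp add: torus_def)
  have ne: "torus d \<noteq> {}" using one by blast
  have rhs: "sup_norm_T d (\<lambda>z. of_nat d + (\<Sum>j<d. z j)) \<ge> 2 * real d"
  proof -
    have bdd: "bdd_above ((\<lambda>z. cmod (of_nat d + (\<Sum>j<d. z j))) ` torus d)"
    proof (rule bdd_aboveI2)
      fix z assume z: "z \<in> torus d"
      have "cmod (of_nat d + (\<Sum>j<d. z j)) \<le> real d + cmod (\<Sum>j<d. z j)"
        using norm_triangle_ineq[of "of_nat d" "\<Sum>j<d. z j"] by simp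
      also have "cmod (\<Sum>j<d. z j) \<le> (\<Sum>j<d. cmod (z j))" by (rule norm_sum)
      also have "\<dots> = real d" using z by (simp add: torus_def)
      finally show "cmod (of_nat d + (\<Sum>j<d. z j)) \<le> 2 * real d" by simp
    qed
    have "cmod (of_nat d + (\<Sum>j<d. (\<lambda>_. 1::complex) j)) = 2 * real d" by simp
    moreover have "cmod (of_nat d + (\<Sum>j<d. (\<lambda>_. 1::complex) j)) \<le> sup_norm_T d (\<lambda>z. of_nat d + (\<Sum>j<d. z j))"
      unfolding sup_norm_T_def by (rule cSUP_upper[OF one bdd])
    ultimately show ?thesis by simp
  qed
  have "\<forall>\<^sub>F \<epsilon> in at_right (0::real). 0 < \<epsilon> \<and> \<epsilon> < e0"
    using eventually_at_right_real[OF e0pos] by (simp add: eventually_at_right_less)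
  moreover have "sup_norm_T d (\<lambda>z. of_nat d + (\<Sum>j<d. z j) - complex_of_real \<epsilon> * monom_T d \<alpha> z)
           < sup_norm_T d (\<lambda>z. of_nat d + (\<Sum>j<d. z j))" if e: "0 < \<epsilon> \<and> \<epsilon> < e0" for \<epsilon>
  proof -
    define \<eta> where "\<eta> = 4 * real d * \<epsilon> - \<epsilon>^2 - 8 * real d * K^2 * \<epsilon>^2"
    have e1: "\<epsilon> \<le> real d / 2" using e unfolding e0_def by simp
    have e2: "\<epsilon> * (8 * real d * K^2 + 1) < 4 * real d"
      using e unfolding e0_def using pos_less_divide_eq[OF den] by auto
    have eta: "\<eta> > 0"
    proof -
      have "\<epsilon> * (\<epsilon> * (8 * real d * K^2 + 1)) < \<epsilon> * (4 * real d)" using e e2 by simp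
      then show ?thesis unfolding \<eta>_def by (simp add: power2_eq_square algebra_simps)
    qed
    have eta2: "4 * (real d)^2 - \<eta> \<ge> 0"
    proof -
      have "(cmod (of_nat d + (\<Sum>j<d. (\<lambda>_. 1::complex) j) - complex_of_real \<epsilon> * monom_T d \<alpha> (\<lambda>_. 1)))^2
          \<le> 4 * (real d)^2 - \<eta>" unfolding \<eta>_def by (rule pointwise[OF one assms K_def]) (use e e1 in auto)
      then show ?thesis by (meson order_trans zero_le_power2)
    qed
    have "sup_norm_T d (\<lambda>z. of_nat d + (\<Sum>j<d. z j) - complex_of_real \<epsilon> * monom_T d \<alpha> z) \<le> sqrt (4 * (real d)^2 - \<eta>)"
      unfolding sup_norm_T_def
    proof (rule cSUP_least[OF ne])
      fix z assume z: "z \<in> torus d"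
      have "(cmod (of_nat d + (\<Sum>j<d. z j) - complex_of_real \<epsilon> * monom_T d \<alpha> z))^2 \<le> 4 * (real d)^2 - \<eta>"
        unfolding \<eta>_def by (rule pointwise[OF z assms K_def]) (use e e1 in auto)
      then show "cmod (of_nat d + (\<Sum>j<d. z j) - complex_of_real \<epsilon> * monom_T d \<alpha> z) \<le> sqrt (4 * (real d)^2 - \<eta>)"
        by (simp add: real_le_rsqrt)
    qed
    also have "sqrt (4 * (real d)^2 - \<eta>) < sqrt (4 * (real d)^2)" using eta eta2 by simp
    also have "sqrt (4 * (real d)^2) = 2 * real d" by (simp add: real_sqrt_mult)
    finally show ?thesis using rhs by linarith
  qed
  ultimately show ?thesis by (rule eventually_mono) blast
qed

end
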